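(* Let $n\ge1$, $\nu\ge1$ be integers and $\delta\in\{0,1,2\}$. The orthogonal graph $\mathcal{O}^{(2\nu+\delta)}_{2^n}$ is vertex transitive and arc transitive.
   Context: Let $V^{2\nu+\delta}$ be the set of tuples $\vec a=(a_1,\ldots,a_{2\nu+\delta})\in(\mathbb{Z}_{2^n})^{2\nu+\delta}$ such that some $a_i$ is a unit of $\mathbb{Z}_{2^n}$. Write $\vec a\sim\vec b$ if $\vec a=\lambda\vec b$ for some $\lambda\in\mathbb{Z}_{2^n}^\times$, let $[\vec a]$ denote the equivalence class and $V^{2\nu+\delta}_\sim$ the set of classes. Let $G_{2\nu+\delta,\Delta}=\begin{pmatrix}0&I_\nu&\\ &0&\\ &&\Delta\end{pmatrix}$ over $\mathbb{Z}_{2^n}$ (first two block sizes $\nu$, unspecified blocks zero), where $\Delta$ is empty if $\delta=0$, $\Delta=(1)$ if $\delta=1$, and $\Delta=\begin{pmatrix}z&1\\0&z\end{pmatrix}$ if $\delta=2$, with $z$ a fixed unit of $\mathbb{Z}_{2^n}$. The orthogonal graph $\mathcal{O}^{(2\nu+\delta)}_{2^n}$ has vertex set $\{[\vec a]\in V^{2\nu+\delta}_\sim:\vec a\,G_{2\nu+\delta,\Delta}\,\vec a^t=0\}$, with $[\vec a]$ adjacent to $[\vec b]$ iff $\vec a(G_{2\nu+\delta,\Delta}+G_{2\nu+\delta,\Delta}^t)\vec b^t\in\mathbb{Z}_{2^n}^\times$. A graph is arc transitive if its automorphism group acts transitively on ordered pairs of adjacent vertices. *)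

theory Defs
  imports Main
begin

text \<open>The ring Z_{2^n} is modelled by the integers 0..2^n-1 with arithmetic mod 2^n.
  Vectors of length m are functions nat => int, zero outside {0..<m}.\<close>

definition zunit :: "nat \<Rightarrow> int \<Rightarrow> bool" where
  "zunit n a \<longleftrightarrow> (\<exists>b. (a * b) mod (2 ^ n) = 1 mod (2 ^ n))"

text \<open>The Gram matrix G_{2nu+delta,Delta}, 0-based indices.\<close>
definition Gmat :: "nat \<Rightarrow> nat \<Rightarrow> int \<Rightarrow> nat \<Rightarrow> nat \<Rightarrow> int" where
  "Gmat \<nu> \<delta> z i j =
     (if i < \<nu> \<and> j = \<nu> + i then 1
      else if \<delta> = 1 \<and> i = 2*\<nu> \<and> j = 2*\<nu> then 1
      else if \<delta> = 2 \<and> i = 2*\<nu> \<and> j = 2*\<nu> then z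
      else if \<delta> = 2 \<and> i = 2*\<nu> \<and> j = 2*\<nu> + 1 then 1
      else if \<delta> = 2 \<and> i = 2*\<nu> + 1 \<and> j = 2*\<nu> + 1 then z
      else 0)"

definition bform :: "nat \<Rightarrow> nat \<Rightarrow> (nat \<Rightarrow> int) \<Rightarrow> (nat \<Rightarrow> nat \<Rightarrow> int) \<Rightarrow> (nat \<Rightarrow> int) \<Rightarrow> int" where
  "bform n m a M b = (\<Sum>i<m. \<Sum>j<m. a i * M i j * b j) mod (2 ^ n)"

definition Vset :: "nat \<Rightarrow> nat \<Rightarrow> (nat \<Rightarrow> int) set" where
  "Vset n m = {a. (\<forall>i. m \<le> i \<longrightarrow> a i = 0) \<and> (\<forall>i<m. 0 \<le> a i \<and> a i < 2 ^ n)
                  \<and> (\<exists>i<m. zunit n (a i))}"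

definition eqcls :: "nat \<Rightarrow> nat \<Rightarrow> (nat \<Rightarrow> int) \<Rightarrow> (nat \<Rightarrow> int) set" where
  "eqcls n m a = {b \<in> Vset n m. \<exists>l. zunit n l \<and> (\<forall>i<m. b i = (l * a i) mod (2 ^ n))}"

definition orth_vertices :: "nat \<Rightarrow> nat \<Rightarrow> nat \<Rightarrow> int \<Rightarrow> (nat \<Rightarrow> int) set set" where
  "orth_vertices n \<nu> \<delta> z =
     {eqcls n (2*\<nu>+\<delta>) a | a. a \<in> Vset n (2*\<nu>+\<delta>) \<and> bform n (2*\<nu>+\<delta>) a (Gmat \<nu> \<delta> z) a = 0}"

definition orth_adj :: "nat \<Rightarrow> nat \<Rightarrow> nat \<Rightarrow> int \<Rightarrow> (nat \<Rightarrow> int) set \<Rightarrow> (nat \<Rightarrow> int) set \<Rightarrow> bool" where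
  "orth_adj n \<nu> \<delta> z X Y \<longleftrightarrow>
     (\<exists>a\<in>X. \<exists>b\<in>Y. zunit n (bform n (2*\<nu>+\<delta>) a (\<lambda>i j. Gmat \<nu> \<delta> z i j + Gmat \<nu> \<delta> z j i) b))"

definition graph_aut :: "'v set \<Rightarrow> ('v \<Rightarrow> 'v \<Rightarrow> bool) \<Rightarrow> ('v \<Rightarrow> 'v) \<Rightarrow> bool" where
  "graph_aut Vs E \<sigma> \<longleftrightarrow> bij_betw \<sigma> Vs Vs \<and> (\<forall>x\<in>Vs. \<forall>y\<in>Vs. E x y \<longleftrightarrow> E (\<sigma> x) (\<sigma> y))"

definition vertex_transitive :: "'v set \<Rightarrow> ('v \<Rightarrow> 'v \<Rightarrow> bool) \<Rightarrow> bool" where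
  "vertex_transitive Vs E \<longleftrightarrow> (\<forall>x\<in>Vs. \<forall>y\<in>Vs. \<exists>\<sigma>. graph_aut Vs E \<sigma> \<and> \<sigma> x = y)"

definition arc_transitive :: "'v set \<Rightarrow> ('v \<Rightarrow> 'v \<Rightarrow> bool) \<Rightarrow> bool" where
  "arc_transitive Vs E \<longleftrightarrow>
     (\<forall>x\<in>Vs. \<forall>y\<in>Vs. \<forall>x'\<in>Vs. \<forall>y'\<in>Vs. E x y \<longrightarrow> E x' y' \<longrightarrow>
        (\<exists>\<sigma>. graph_aut Vs E \<sigma> \<and> \<sigma> x = x' \<and> \<sigma> y = y'))"

end

theory Submission
  imports Defs "HOL-Number_Theory.Cong"
begin


definition Mf :: "(nat \<Rightarrow> nat \<Rightarrow> int) \<Rightarrow> nat \<Rightarrow> (nat \<Rightarrow> int) \<Rightarrow> (nat \<Rightarrow> int) \<Rightarrow> int" where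
  "Mf M m x y = (\<Sum>i<m. \<Sum>j<m. x i * M i j * y j)"

lemma Mf_add_left[simp]: "Mf M m (\<lambda>i. x i + y i) v = Mf M m x v + Mf M m y v"
  by (simp add: Mf_def algebra_simps sum.distrib)
lemma Mf_add_right[simp]: "Mf M m v (\<lambda>i. x i + y i) = Mf M m v x + Mf M m v y"
  by (simp add: Mf_def algebra_simps sum.distrib)
lemma Mf_diff_left[simp]: "Mf M m (\<lambda>i. x i - y i) v = Mf M m x v - Mf M m y v"
  by (simp add: Mf_def algebra_simps sum_subtractf)
lemma Mf_diff_right[simp]: "Mf M m v (\<lambda>i. x i - y i) = Mf M m v x - Mf M m v y"
  by (simp add: Mf_def algebra_simps sum_subtractf)
lemma Mf_smul_left[simp]: "Mf M m (\<lambda>i. c * x i) v = c * Mf M m x v"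
  by (simp add: Mf_def sum_distrib_left algebra_simps)
lemma Mf_smul_right[simp]: "Mf M m v (\<lambda>i. c * x i) = c * Mf M m v x"
  by (simp add: Mf_def sum_distrib_left algebra_simps)

lemma Mf_neg_left[simp]: "Mf M m (\<lambda>i. - x i) v = - Mf M m x v"
  by (simp add: Mf_def sum_negf)
lemma Mf_neg_right[simp]: "Mf M m v (\<lambda>i. - x i) = - Mf M m v x"
  by (simp add: Mf_def sum_negf)

definition Qf :: "(nat \<Rightarrow> nat \<Rightarrow> int) \<Rightarrow> nat \<Rightarrow> (nat \<Rightarrow> int) \<Rightarrow> int" where
  "Qf M m x = Mf M m x x"
definition Bf :: "(nat \<Rightarrow> nat \<Rightarrow> int) \<Rightarrow> nat \<Rightarrow> (nat \<Rightarrow> int) \<Rightarrow> (nat \<Rightarrow> int) \<Rightarrow> int" where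
  "Bf M m x y = Mf M m x y + Mf M m y x"

lemma bform_Q: "bform n m a M a = Qf M m a mod 2^n"
  by (simp add: bform_def Qf_def Mf_def)

lemma bform_B: "bform n m a (\<lambda>i j. M i j + M j i) b = Bf M m a b mod 2^n"
proof -
  have "(\<Sum>i<m. \<Sum>j<m. a i * (M i j + M j i) * b j)
     = (\<Sum>i<m. \<Sum>j<m. a i * M i j * b j) + (\<Sum>i<m. \<Sum>j<m. b j * M j i * a i)"
    by (simp add: algebra_simps sum.distrib)
  also have "(\<Sum>i<m. \<Sum>j<m. b j * M j i * a i) = (\<Sum>j<m. \<Sum>i<m. b j * M j i * a i)"
    by (rule sum.swap)
  finally show ?thesis by (simp add: bform_def Bf_def Mf_def)
qed

lemma Bf_sym: "Bf M m x y = Bf M m y x" by (simp add: Bf_def)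
lemma Bf_self: "Bf M m x x = 2 * Qf M m x" by (simp add: Bf_def Qf_def)

definition eich :: "(nat \<Rightarrow> nat \<Rightarrow> int) \<Rightarrow> nat \<Rightarrow> (nat \<Rightarrow> int) \<Rightarrow> (nat \<Rightarrow> int) \<Rightarrow> (nat \<Rightarrow> int) \<Rightarrow> (nat \<Rightarrow> int)" where
  "eich M m u w x = (\<lambda>i. x i + Bf M m x u * w i - (Bf M m x w + Qf M m w * Bf M m x u) * u i)"

lemma eich_Q:
  assumes "Qf M m u = 0" "Bf M m u w = 0"
  shows "Qf M m (eich M m u w x) = Qf M m x"
proof -
  define A where "A = Bf M m x u"
  define Bt where "Bt = Bf M m x w + Qf M m w * A"
  have e: "eich M m u w x = (\<lambda>i. x i + A * w i - Bt * u i)"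
    by (simp add: eich_def A_def Bt_def)
  have u0: "Mf M m u u = 0" using assms(1) by (simp add: Qf_def)
  have uw: "Mf M m u w = - Mf M m w u" using assms(2) by (simp add: Bf_def)
  have "Qf M m (\<lambda>i. x i + A * w i - Bt * u i) = Qf M m x + A * Bf M m x w + A*A * Qf M m w - Bt * A"
    unfolding Qf_def Bf_def by (simp add: u0 uw) (simp add: A_def Bf_def algebra_simps)
  then show ?thesis using e by (simp add: Bt_def algebra_simps)
qed

lemma Qf_add: "Qf M m (\<lambda>i. x i + y i) = Qf M m x + Qf M m y + Bf M m x y"
  by (simp add: Qf_def Bf_def)
lemma Qf_smul: "Qf M m (\<lambda>i. c * x i) = c * c * Qf M m x"
  by (simp add: Qf_def)
lemma Qf_neg: "Qf M m (\<lambda>i. - x i) = Qf M m x"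
  by (simp add: Qf_def)

lemma eich_inv:
  assumes "Qf M m u = 0" "Bf M m u w = 0"
  shows "eich M m u (\<lambda>i. - w i) (eich M m u w x) = x"
proof -
  define A where "A = Bf M m x u"
  define Bt where "Bt = Bf M m x w + Qf M m w * A"
  define y where "y = (\<lambda>i. x i + A * w i - Bt * u i)"
  have e: "eich M m u w x = y"
    by (simp add: eich_def A_def Bt_def y_def)
  have u0: "Mf M m u u = 0" using assms(1) by (simp add: Qf_def)
  have uw: "Mf M m u w = - Mf M m w u" using assms(2) by (simp add: Bf_def)
  have b1: "Bf M m y u = A"
    unfolding y_def Bf_def by (simp add: u0 uw) (simp add: A_def Bf_def algebra_simps)
  have b2: "Bf M m y (\<lambda>i. - w i) = - Bf M m x w - 2 * A * Qf M m w"
    unfolding y_def Bf_def by (simp add: u0 uw) (simp add: Qf_def Bf_def algebra_simps)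
  show ?thesis
    unfolding e by (rule ext) (simp add: eich_def b1 b2 Qf_neg, simp add: y_def Bt_def algebra_simps)
qed




lemma eich_add: "eich M m u w (\<lambda>i. x i + y i) = (\<lambda>i. eich M m u w x i + eich M m u w y i)"
  unfolding eich_def Bf_def by (rule ext) (simp add: algebra_simps)
lemma eich_smul: "eich M m u w (\<lambda>i. c * x i) = (\<lambda>i. c * eich M m u w x i)"
  unfolding eich_def Bf_def by (rule ext) (simp add: algebra_simps)

definition supp :: "nat \<Rightarrow> (nat \<Rightarrow> int) \<Rightarrow> bool" where
  "supp m x \<longleftrightarrow> (\<forall>i. m \<le> i \<longrightarrow> x i = 0)"

lemma eich_supp: "supp m u \<Longrightarrow> supp m w \<Longrightarrow> supp m x \<Longrightarrow> supp m (eich M m u w x)"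
  by (simp add: supp_def eich_def)

definition iso :: "(nat \<Rightarrow> nat \<Rightarrow> int) \<Rightarrow> nat \<Rightarrow> ((nat \<Rightarrow> int) \<Rightarrow> (nat \<Rightarrow> int)) \<Rightarrow> bool" where
  "iso M m T \<longleftrightarrow> (\<forall>x y. T (\<lambda>i. x i + y i) = (\<lambda>i. T x i + T y i))
     \<and> (\<forall>c x. T (\<lambda>i. c * x i) = (\<lambda>i. c * T x i))
     \<and> (\<forall>x. supp m x \<longrightarrow> supp m (T x)) \<and> (\<forall>x. Qf M m (T x) = Qf M m x)"

definition inviso :: "(nat \<Rightarrow> nat \<Rightarrow> int) \<Rightarrow> nat \<Rightarrow> ((nat \<Rightarrow> int) \<Rightarrow> (nat \<Rightarrow> int))
   \<Rightarrow> ((nat \<Rightarrow> int) \<Rightarrow> (nat \<Rightarrow> int)) \<Rightarrow> bool" where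
  "inviso M m T S \<longleftrightarrow> iso M m T \<and> iso M m S \<and> (\<forall>x. S (T x) = x) \<and> (\<forall>x. T (S x) = x)"

lemma eich_iso:
  assumes "Qf M m u = 0" "Bf M m u w = 0" "supp m u" "supp m w"
  shows "iso M m (eich M m u w)"
  using assms by (simp add: iso_def eich_add eich_smul eich_supp eich_Q)

lemma eich_inviso:
  assumes "Qf M m u = 0" "Bf M m u w = 0" "supp m u" "supp m w"
  shows "inviso M m (eich M m u w) (eich M m u (\<lambda>i. - w i))"
proof -
  have a: "Bf M m u (\<lambda>i. - w i) = 0" using assms(2) by (simp add: Bf_def)
  have s: "supp m (\<lambda>i. - w i)" using assms(4) by (simp add: supp_def)
  have i2: "eich M m u w (eich M m u (\<lambda>i. - w i) x) = x" for x
    using eich_inv[OF assms(1) a, of x] by simp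
  show ?thesis
    using eich_iso[OF assms] eich_iso[OF assms(1) a assms(3) s] eich_inv[OF assms(1,2)] i2
    by (simp add: inviso_def)
qed

lemma inviso_sym: "inviso M m T S \<Longrightarrow> inviso M m S T"
  by (auto simp: inviso_def)

lemma iso_comp: "iso M m T \<Longrightarrow> iso M m T' \<Longrightarrow> iso M m (\<lambda>x. T (T' x))"
  by (simp add: iso_def)

lemma inviso_comp: "inviso M m T S \<Longrightarrow> inviso M m T' S' \<Longrightarrow>
   inviso M m (\<lambda>x. T (T' x)) (\<lambda>x. S' (S x))"
  by (simp add: inviso_def iso_comp)

lemma iso_add: "iso M m T \<Longrightarrow> T (\<lambda>i. x i + y i) = (\<lambda>i. T x i + T y i)"
  by (simp add: iso_def)
lemma iso_smul: "iso M m T \<Longrightarrow> T (\<lambda>i. c * x i) = (\<lambda>i. c * T x i)"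
  by (simp add: iso_def)
lemma iso_supp: "iso M m T \<Longrightarrow> supp m x \<Longrightarrow> supp m (T x)"
  by (simp add: iso_def)
lemma iso_Q: "iso M m T \<Longrightarrow> Qf M m (T x) = Qf M m x"
  by (simp add: iso_def)

lemma iso_B: "iso M m T \<Longrightarrow> Bf M m (T x) (T y) = Bf M m x y"
proof -
  assume T: "iso M m T"
  have h: "T (\<lambda>i. x i + y i) = (\<lambda>i. T x i + T y i)" using T by (simp add: iso_def)
  have "Qf M m (\<lambda>i. T x i + T y i) = Qf M m (\<lambda>i. x i + y i)"
    using iso_Q[OF T, of "\<lambda>i. x i + y i"] h by simp
  then show ?thesis using iso_Q[OF T, of x] iso_Q[OF T, of y] by (simp add: Qf_add)
qed



definition congv :: "int \<Rightarrow> nat \<Rightarrow> (nat \<Rightarrow> int) \<Rightarrow> (nat \<Rightarrow> int) \<Rightarrow> bool" where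
  "congv N m x y \<longleftrightarrow> (\<forall>i<m. x i mod N = y i mod N)"

lemma congv_refl[simp]: "congv N m x x" by (simp add: congv_def)
lemma congv_sym: "congv N m x y \<Longrightarrow> congv N m y x" by (simp add: congv_def)
lemma congv_trans: "congv N m x y \<Longrightarrow> congv N m y z \<Longrightarrow> congv N m x z" by (simp add: congv_def)
lemma congv_smul: "congv N m x y \<Longrightarrow> congv N m (\<lambda>i. c * x i) (\<lambda>i. c * y i)"
  unfolding congv_def by (metis mod_mult_right_eq)

lemma iso_congv:
  assumes T: "iso M m T" and sx: "supp m x" and sy: "supp m y" and c: "congv N m x y"
  shows "congv N m (T x) (T y)"
proof -
  define k where "k = (\<lambda>i. (y i - x i) div N)"
  have "y = (\<lambda>i. x i + N * k i)"
  proof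
    fix i show "y i = x i + N * k i"
    proof (cases "i < m")
      case True
      then have "y i mod N = x i mod N" using c by (simp add: congv_def)
      then have "N dvd y i - x i" by (simp add: mod_eq_dvd_iff)
      then show ?thesis by (simp add: k_def)
    next
      case False then show ?thesis using sx sy by (simp add: supp_def k_def)
    qed
  qed
  then have "T y = (\<lambda>i. T x i + N * T k i)"
    using iso_add[OF T] iso_smul[OF T] by simp
  then show ?thesis by (simp add: congv_def)
qed




lemma inviso_odd:
  assumes T: "inviso M m T S" and sx: "supp m x" and o: "\<exists>i<m. odd (x i)"
  shows "\<exists>i<m. odd (T x i)"
proof (rule ccontr)
  assume "\<not> ?thesis"
  then have ev: "\<forall>i<m. even (T x i)" by auto
  have sT: "supp m (T x)" using T sx by (simp add: inviso_def iso_def)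
  define k where "k = (\<lambda>i. T x i div 2)"
  have "T x = (\<lambda>i. 2 * k i)"
  proof
    fix i show "T x i = 2 * k i"
      using ev sT by (cases "i < m") (auto simp: k_def supp_def)
  qed
  then have "S (T x) = (\<lambda>i. 2 * S k i)" using T by (simp add: inviso_def iso_def)
  then have "x = (\<lambda>i. 2 * S k i)" using T by (simp add: inviso_def)
  then show False using o by auto
qed

lemma cong_Mf:
  assumes "congv N m x x'" "congv N m y y'"
  shows "[Mf M m x y = Mf M m x' y'] (mod N)"
  unfolding Mf_def
  apply (intro cong_sum cong_mult cong_refl)
  using assms by (auto simp: congv_def cong_def)

lemma cong_Qf: "congv N m x x' \<Longrightarrow> Qf M m x mod N = Qf M m x' mod N"
  using cong_Mf[of N m x x' x x' M] by (simp add: Qf_def cong_def)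

lemma cong_Bf: "congv N m x x' \<Longrightarrow> congv N m y y' \<Longrightarrow> Bf M m x y mod N = Bf M m x' y' mod N"
  using cong_add[OF cong_Mf[of N m x x' y y' M] cong_Mf[of N m y y' x x' M]]
  by (simp add: Bf_def cong_def)




lemma even_mod_pow2: "(n::nat) \<ge> 1 \<Longrightarrow> even ((a::int) mod 2^n) \<longleftrightarrow> even a"
proof -
  assume n: "n \<ge> 1"
  have "(2::int) dvd 2^n" using n by (simp add: dvd_power)
  then have "a mod 2^n mod 2 = a mod 2" by (rule mod_mod_cancel)
  then show ?thesis by (simp add: even_iff_mod_2_eq_zero)
qed

locale orth =
  fixes n \<nu> \<delta> :: nat and z :: int
  assumes n1: "n \<ge> 1" and nu1: "\<nu> \<ge> 1" and dl: "\<delta> \<in> {0,1,2}" and zu: "zunit n z"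
begin

abbreviation "m \<equiv> 2*\<nu>+\<delta>"
abbreviation "G \<equiv> Gmat \<nu> \<delta> z"
abbreviation "N \<equiv> (2::int)^n"

lemma N_gt1: "N > 1"
  using n1 by (intro one_less_power) auto

lemma zunit_odd: "zunit n x \<longleftrightarrow> odd x"
proof
  assume "zunit n x"
  then obtain b where b: "(x * b) mod N = 1 mod N" by (auto simp: zunit_def)
  then have "(x * b) mod N = 1" using N_gt1 n1 by simp
  then have "odd (x * b)" using even_mod_pow2[OF n1, of "x*b"] by simp
  then show "odd x" by simp
next
  assume "odd x"
  then have "coprime x N" by simp
  then obtain b where "[x * b = 1] (mod N)" using cong_solve_coprime_int by blast
  then show "zunit n x" by (auto simp: zunit_def cong_def)
qed

lemma odd_z: "odd z" using zu zunit_odd by simp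

lemma inverse_ex: "odd l \<Longrightarrow> \<exists>k. odd k \<and> (l * k) mod N = 1"
proof -
  assume "odd l"
  then obtain k where k: "(l * k) mod N = 1 mod N" using zunit_odd by (auto simp: zunit_def)
  then have k1: "(l * k) mod N = 1" using N_gt1 n1 by simp
  then have "odd (l * k)" using even_mod_pow2[OF n1, of "l*k"] by simp
  then show ?thesis using k1 by auto
qed

lemma inv_cancel: "(l * k) mod N = 1 \<Longrightarrow> (k * (l * v)) mod N = v mod N"
proof -
  assume h: "(l * k) mod N = 1"
  have "(k * (l * v)) mod N = ((l * k) * v) mod N" by (simp add: algebra_simps)
  also have "\<dots> = (((l * k) mod N) * v) mod N" by (simp add: mod_mult_left_eq)
  finally show ?thesis using h by simp
qed

lemma Vset_iff: "x \<in> Vset n m \<longleftrightarrow> supp m x \<and> (\<forall>i<m. 0 \<le> x i \<and> x i < N) \<and> (\<exists>i<m. odd (x i))"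
  by (auto simp: Vset_def supp_def zunit_odd)

definition red :: "(nat \<Rightarrow> int) \<Rightarrow> (nat \<Rightarrow> int)" where
  "red x = (\<lambda>i. if i < m then x i mod N else 0)"

lemma red_Vset: "\<exists>i<m. odd (x i) \<Longrightarrow> red x \<in> Vset n m"
  using even_mod_pow2[OF n1] N_gt1 by (auto simp: Vset_iff red_def supp_def)

lemma red_congv: "congv N m (red x) x"
  by (simp add: congv_def red_def)

lemma Vset_eq: "a \<in> Vset n m \<Longrightarrow> b \<in> Vset n m \<Longrightarrow> congv N m a b \<Longrightarrow> a = b"
proof
  fix i assume a: "a \<in> Vset n m" and b: "b \<in> Vset n m" and c: "congv N m a b"
  show "a i = b i"
  proof (cases "i < m")
    case True
    then have "a i mod N = a i" "b i mod N = b i" using a b by (auto simp: Vset_iff)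
    then show ?thesis using c True by (metis congv_def)
  next
    case False then show ?thesis using a b by (auto simp: Vset_iff supp_def)
  qed
qed

lemma red_id: "a \<in> Vset n m \<Longrightarrow> red a = a"
  by (rule Vset_eq, rule red_Vset) (auto simp: Vset_iff red_congv)

lemma Vset_supp: "a \<in> Vset n m \<Longrightarrow> supp m a" by (simp add: Vset_iff)

lemma eqcls_iff: "b \<in> eqcls n m a \<longleftrightarrow> b \<in> Vset n m \<and> (\<exists>l. odd l \<and> congv N m b (\<lambda>i. l * a i))"
proof
  assume "b \<in> eqcls n m a"
  then show "b \<in> Vset n m \<and> (\<exists>l. odd l \<and> congv N m b (\<lambda>i. l * a i))"
    by (auto simp: eqcls_def congv_def zunit_odd)
next
  assume h: "b \<in> Vset n m \<and> (\<exists>l. odd l \<and> congv N m b (\<lambda>i. l * a i))"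
  then obtain l where l: "odd l" "congv N m b (\<lambda>i. l * a i)" by blast
  have "\<forall>i<m. b i = (l * a i) mod N"
  proof (intro allI impI)
    fix i assume i: "i < m"
    then have "b i mod N = b i" using h by (auto simp: Vset_iff)
    then show "b i = (l * a i) mod N" using l(2) i by (metis congv_def)
  qed
  then show "b \<in> eqcls n m a" using h l by (auto simp: eqcls_def zunit_odd)
qed

lemma self_eqcls: "a \<in> Vset n m \<Longrightarrow> a \<in> eqcls n m a"
  by (simp add: eqcls_iff exI[of _ 1])

lemma cls_eq:
  assumes a: "a \<in> Vset n m" and b: "b \<in> eqcls n m a"
  shows "eqcls n m b = eqcls n m a"
proof -
  obtain l where l: "odd l" "congv N m b (\<lambda>i. l * a i)" and bV: "b \<in> Vset n m"
    using b by (auto simp: eqcls_iff)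
  obtain k where k: "odd k" "(l * k) mod N = 1" using inverse_ex[OF l(1)] by blast
  have ab: "congv N m a (\<lambda>i. k * b i)"
  proof -
    have "congv N m (\<lambda>i. k * b i) (\<lambda>i. k * (l * a i))" by (rule congv_smul[OF l(2)])
    moreover have "congv N m (\<lambda>i. k * (l * a i)) a" using inv_cancel[OF k(2)] by (simp add: congv_def)
    ultimately show ?thesis by (meson congv_sym congv_trans)
  qed
  show ?thesis
  proof
    show "eqcls n m b \<subseteq> eqcls n m a"
    proof
      fix c assume "c \<in> eqcls n m b"
      then obtain l' where "odd l'" "congv N m c (\<lambda>i. l' * b i)" and cV: "c \<in> Vset n m"
        by (auto simp: eqcls_iff)
      moreover have "congv N m (\<lambda>i. l' * b i) (\<lambda>i. (l' * l) * a i)"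
        using congv_smul[OF l(2), of l'] by (simp add: mult.assoc)
      ultimately show "c \<in> eqcls n m a" using l(1) unfolding eqcls_iff
        by (intro conjI exI[of _ "l' * l"]) (auto intro: congv_trans)
    qed
  next
    show "eqcls n m a \<subseteq> eqcls n m b"
    proof
      fix c assume "c \<in> eqcls n m a"
      then obtain l' where "odd l'" "congv N m c (\<lambda>i. l' * a i)" and cV: "c \<in> Vset n m"
        by (auto simp: eqcls_iff)
      moreover have "congv N m (\<lambda>i. l' * a i) (\<lambda>i. (l' * k) * b i)"
        using congv_smul[OF ab, of l'] by (simp add: mult.assoc)
      ultimately show "c \<in> eqcls n m b" using k(1) unfolding eqcls_iff
        by (intro conjI exI[of _ "l' * k"]) (auto intro: congv_trans)
    qed
  qed
qed

lemma vert_iff: "X \<in> orth_vertices n \<nu> \<delta> z \<longleftrightarrow> (\<exists>a\<in>Vset n m. Qf G m a mod N = 0 \<and> X = eqcls n m a)"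
  unfolding orth_vertices_def bform_Q mem_Collect_eq
  apply (rule iffI)
   apply (elim exE conjE, rule bexI, rule conjI, assumption, assumption, assumption)
  apply (elim bexE conjE, rule exI, rule conjI, assumption, rule conjI, assumption, assumption)
  done

lemma vert_rep:
  assumes X: "X \<in> orth_vertices n \<nu> \<delta> z" and a: "a \<in> X"
  shows "a \<in> Vset n m \<and> Qf G m a mod N = 0 \<and> X = eqcls n m a"
proof -
  obtain a0 where a0: "a0 \<in> Vset n m" "Qf G m a0 mod N = 0" "X = eqcls n m a0"
    using X by (auto simp: vert_iff)
  then obtain l where l: "congv N m a (\<lambda>i. l * a0 i)" and aV: "a \<in> Vset n m"
    using a by (auto simp: eqcls_iff)
  have "Qf G m a mod N = Qf G m (\<lambda>i. l * a0 i) mod N" by (rule cong_Qf[OF l])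
  also have "\<dots> = (l * l * Qf G m a0) mod N" by (simp add: Qf_smul)
  also have "\<dots> = (l * l * (Qf G m a0 mod N)) mod N" by (simp add: mod_mult_right_eq)
  finally have "Qf G m a mod N = 0" using a0(2) by simp
  then show ?thesis using aV cls_eq[OF a0(1)] a a0(3) by auto
qed

lemma adj_iff: "orth_adj n \<nu> \<delta> z X Y \<longleftrightarrow> (\<exists>a\<in>X. \<exists>b\<in>Y. odd (Bf G m a b))"
  by (simp add: orth_adj_def bform_B zunit_odd even_mod_pow2[OF n1])

definition sig :: "((nat \<Rightarrow> int) \<Rightarrow> (nat \<Rightarrow> int)) \<Rightarrow> (nat \<Rightarrow> int) set \<Rightarrow> (nat \<Rightarrow> int) set" where
  "sig T X = (\<lambda>x. red (T x)) ` X"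

lemma smul_odd: "a \<in> Vset n m \<Longrightarrow> odd l \<Longrightarrow> \<exists>i<m. odd (l * a i)"
  by (auto simp: Vset_iff)

lemma sig_eqcls:
  assumes T: "inviso G m T S" and a: "a \<in> Vset n m"
  shows "red (T a) \<in> Vset n m \<and> sig T (eqcls n m a) = eqcls n m (red (T a))"
proof -
  have Ti: "iso G m T" using T by (simp add: inviso_def)
  have sa: "supp m a" using a by (simp add: Vset_iff)
  have oa: "\<exists>i<m. odd (a i)" using a by (simp add: Vset_iff)
  have rV: "red (T a) \<in> Vset n m" by (rule red_Vset[OF inviso_odd[OF T sa oa]])
  have sl: "supp m (\<lambda>i. l * a i)" for l using sa by (simp add: supp_def)
  have "sig T (eqcls n m a) = eqcls n m (red (T a))"
  proof
    show "sig T (eqcls n m a) \<subseteq> eqcls n m (red (T a))"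
    proof
      fix y assume "y \<in> sig T (eqcls n m a)"
      then obtain x where x: "x \<in> eqcls n m a" and y: "y = red (T x)" by (auto simp: sig_def)
      obtain l where l: "odd l" "congv N m x (\<lambda>i. l * a i)" and xV: "x \<in> Vset n m"
        using x by (auto simp: eqcls_iff)
      have sx: "supp m x" using xV by (simp add: Vset_iff)
      have c1: "congv N m (T x) (\<lambda>i. l * T a i)"
        using iso_congv[OF Ti sx sl l(2)] iso_smul[OF Ti] by simp
      have c2: "congv N m (\<lambda>i. l * T a i) (\<lambda>i. l * red (T a) i)"
        by (rule congv_smul, rule congv_sym, rule red_congv)
      have yV: "y \<in> Vset n m" unfolding y
        by (rule red_Vset[OF inviso_odd[OF T sx]]) (use xV in \<open>simp add: Vset_iff\<close>)
      have "congv N m y (\<lambda>i. l * red (T a) i)"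
        unfolding y by (rule congv_trans[OF red_congv congv_trans[OF c1 c2]])
      then show "y \<in> eqcls n m (red (T a))" using yV l(1) by (auto simp: eqcls_iff)
    qed
  next
    show "eqcls n m (red (T a)) \<subseteq> sig T (eqcls n m a)"
    proof
      fix c assume "c \<in> eqcls n m (red (T a))"
      then obtain l where l: "odd l" "congv N m c (\<lambda>i. l * red (T a) i)" and cV: "c \<in> Vset n m"
        by (auto simp: eqcls_iff)
      define x where "x = red (\<lambda>i. l * a i)"
      have xV: "x \<in> Vset n m" unfolding x_def by (rule red_Vset[OF smul_odd[OF a l(1)]])
      have xa: "congv N m x (\<lambda>i. l * a i)" unfolding x_def by (rule red_congv)
      have xc: "x \<in> eqcls n m a" using xV xa l(1) by (auto simp: eqcls_iff)
      have sx: "supp m x" using xV by (simp add: Vset_iff)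
      have c1: "congv N m (T x) (\<lambda>i. l * T a i)"
        using iso_congv[OF Ti sx sl xa] iso_smul[OF Ti] by simp
      have c2: "congv N m (\<lambda>i. l * T a i) (\<lambda>i. l * red (T a) i)"
        by (rule congv_smul, rule congv_sym, rule red_congv)
      have yV: "red (T x) \<in> Vset n m"
        by (rule red_Vset[OF inviso_odd[OF T sx]]) (use xV in \<open>simp add: Vset_iff\<close>)
      have "congv N m (red (T x)) c"
        by (rule congv_trans[OF red_congv congv_trans[OF c1 congv_trans[OF c2 congv_sym[OF l(2)]]]])
      then have "red (T x) = c" using Vset_eq yV cV by blast
      then show "c \<in> sig T (eqcls n m a)" using xc by (auto simp: sig_def)
    qed
  qed
  then show ?thesis using rV by simp
qed

lemma sig_vert:
  assumes T: "inviso G m T S" and X: "X \<in> orth_vertices n \<nu> \<delta> z"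
  shows "sig T X \<in> orth_vertices n \<nu> \<delta> z"
proof -
  obtain a where a: "a \<in> Vset n m" "Qf G m a mod N = 0" "X = eqcls n m a"
    using X by (auto simp: vert_iff)
  have Ti: "iso G m T" using T by (simp add: inviso_def)
  have "Qf G m (red (T a)) mod N = Qf G m (T a) mod N" by (rule cong_Qf[OF red_congv])
  also have "\<dots> = 0" using a(2) iso_Q[OF Ti] by simp
  finally have q: "Qf G m (red (T a)) mod N = 0" .
  have "red (T a) \<in> Vset n m" "sig T X = eqcls n m (red (T a))"
    using sig_eqcls[OF T a(1)] a(3) by auto
  then show ?thesis unfolding vert_iff using q by (intro bexI[of _ "red (T a)"] conjI) simp_all
qed

lemma sig_inv:
  assumes T: "inviso G m T S" and X: "X \<in> orth_vertices n \<nu> \<delta> z"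
  shows "sig S (sig T X) = X"
proof -
  obtain a where a: "a \<in> Vset n m" "Qf G m a mod N = 0" "X = eqcls n m a"
    using X by (auto simp: vert_iff)
  have S: "inviso G m S T" using T by (rule inviso_sym)
  have Si: "iso G m S" "iso G m T" using T by (auto simp: inviso_def)
  have r: "red (T a) \<in> Vset n m" and e1: "sig T X = eqcls n m (red (T a))"
    using sig_eqcls[OF T a(1)] a(3) by auto
  have r2: "red (S (red (T a))) \<in> Vset n m" and e2: "sig S (eqcls n m (red (T a))) = eqcls n m (red (S (red (T a))))"
    using sig_eqcls[OF S r] by auto
  have sa: "supp m a" using a by (simp add: Vset_iff)
  have "congv N m (S (red (T a))) (S (T a))"
    by (rule iso_congv[OF Si(1) Vset_supp[OF r] iso_supp[OF Si(2) sa] red_congv])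
  moreover have "S (T a) = a" using T by (simp add: inviso_def)
  ultimately have "congv N m (S (red (T a))) a" by simp
  then have "congv N m (red (S (red (T a)))) a"
    by (rule congv_trans[OF red_congv])
  then have "red (S (red (T a))) = a" using Vset_eq r2 a(1) by blast
  then show ?thesis using e1 e2 a(3) by simp
qed

lemma sig_adj:
  assumes T: "inviso G m T S" and XY: "orth_adj n \<nu> \<delta> z X Y"
  shows "orth_adj n \<nu> \<delta> z (sig T X) (sig T Y)"
proof -
  obtain a b where ab: "a \<in> X" "b \<in> Y" "odd (Bf G m a b)" using XY by (auto simp: adj_iff)
  have Ti: "iso G m T" using T by (simp add: inviso_def)
  have "Bf G m (red (T a)) (red (T b)) mod N = Bf G m (T a) (T b) mod N"
    by (rule cong_Bf[OF red_congv red_congv])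
  also have "\<dots> = Bf G m a b mod N" using iso_B[OF Ti] by simp
  finally have "odd (Bf G m (red (T a)) (red (T b)))"
    using ab(3) even_mod_pow2[OF n1] by metis
  moreover have "red (T a) \<in> sig T X" "red (T b) \<in> sig T Y" using ab by (auto simp: sig_def)
  ultimately show ?thesis by (auto simp: adj_iff)
qed

lemma sig_aut:
  assumes T: "inviso G m T S"
  shows "graph_aut (orth_vertices n \<nu> \<delta> z) (orth_adj n \<nu> \<delta> z) (sig T)"
proof -
  have S: "inviso G m S T" using T by (rule inviso_sym)
  have "bij_betw (sig T) (orth_vertices n \<nu> \<delta> z) (orth_vertices n \<nu> \<delta> z)"
    by (rule bij_betw_byWitness[where f'="sig S"])
       (auto simp: sig_inv[OF T] sig_inv[OF S] sig_vert[OF T] sig_vert[OF S])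
  moreover have "orth_adj n \<nu> \<delta> z X Y \<longleftrightarrow> orth_adj n \<nu> \<delta> z (sig T X) (sig T Y)"
    if "X \<in> orth_vertices n \<nu> \<delta> z" "Y \<in> orth_vertices n \<nu> \<delta> z" for X Y
    using sig_adj[OF T, of X Y] sig_adj[OF S, of "sig T X" "sig T Y"] sig_inv[OF T] that by auto
  ultimately show ?thesis by (simp add: graph_aut_def)
qed

end



definition ev :: "nat \<Rightarrow> nat \<Rightarrow> int" where
  "ev k = (\<lambda>i. if i = k then 1 else 0)"

lemma ev_apply: "ev k i = (if i = k then 1 else 0)" by (simp add: ev_def)

lemma if01_mult[simp]: "(if c then 1 else 0) * (a::int) = (if c then a else 0)" by simp
lemma if01_mult'[simp]: "(a::int) * (if c then 1 else 0) = (if c then a else 0)" by simp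

lemma Mf_ev_left: "k < m \<Longrightarrow> Mf M m (ev k) y = (\<Sum>j<m. M k j * y j)"
proof -
  assume k: "k < m"
  have "Mf M m (ev k) y = (\<Sum>i<m. if i = k then (\<Sum>j<m. M i j * y j) else 0)"
    unfolding Mf_def by (intro sum.cong refl) (simp add: ev_apply)
  then show ?thesis using k by simp
qed

lemma Mf_ev_right: "k < m \<Longrightarrow> Mf M m y (ev k) = (\<Sum>i<m. y i * M i k)"
proof -
  assume k: "k < m"
  have "Mf M m y (ev k) = (\<Sum>i<m. y i * M i k)"
    using k unfolding Mf_def by (intro sum.cong refl) (simp add: ev_apply)
  then show ?thesis using k by simp
qed

definition zw :: "nat \<Rightarrow> (nat \<Rightarrow> int) \<Rightarrow> (nat \<Rightarrow> int)" where
  "zw \<nu> x = (\<lambda>i. if i = 0 \<or> i = \<nu> then 0 else x i)"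

context orth begin

lemma G0j: "G 0 j = (if j = \<nu> then 1 else 0)"
  using nu1 by (simp add: Gmat_def)
lemma Gi0: "G i 0 = 0"
  using nu1 by (simp add: Gmat_def)
lemma Gnuj: "G \<nu> j = 0"
  using nu1 by (simp add: Gmat_def)
lemma Ginu: "G i \<nu> = (if i = 0 then 1 else 0)"
  using nu1 by (auto simp add: Gmat_def)

lemma nu_lt: "\<nu> < m" "0 < m" using nu1 by auto

lemma Mf_e0_l: "Mf G m (ev 0) y = y \<nu>"
  using nu_lt by (simp add: Mf_ev_left G0j)
lemma Mf_e0_r: "Mf G m y (ev 0) = 0"
  using nu_lt by (simp add: Mf_ev_right Gi0)
lemma Mf_enu_l: "Mf G m (ev \<nu>) y = 0"
  using nu_lt by (simp add: Mf_ev_left Gnuj)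
lemma Mf_enu_r: "Mf G m y (ev \<nu>) = y 0"
  using nu_lt by (simp add: Mf_ev_right Ginu)

lemma B_e0: "Bf G m (ev 0) y = y \<nu>" by (simp add: Bf_def Mf_e0_l Mf_e0_r)
lemma B_enu: "Bf G m (ev \<nu>) y = y 0" by (simp add: Bf_def Mf_enu_l Mf_enu_r)
lemma Q_e0: "Qf G m (ev 0) = 0" by (simp add: Qf_def Mf_e0_r)
lemma Q_enu: "Qf G m (ev \<nu>) = 0" by (simp add: Qf_def Mf_enu_l)

lemma supp_ev: "k < m \<Longrightarrow> supp m (ev k)" by (simp add: supp_def ev_def)
lemma supp_zw: "supp m x \<Longrightarrow> supp m (zw \<nu> x)" by (simp add: supp_def zw_def)
lemma zw_0[simp]: "zw \<nu> x 0 = 0" and zw_nu[simp]: "zw \<nu> x \<nu> = 0" by (simp_all add: zw_def)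

lemma decomp: "x = (\<lambda>i. x 0 * ev 0 i + x \<nu> * ev \<nu> i + zw \<nu> x i)"
  using nu1 by (auto simp: ev_apply zw_def)

lemma Q_decomp: "Qf G m x = x 0 * x \<nu> + Qf G m (zw \<nu> x)"
proof -
  have "Qf G m x = Qf G m (\<lambda>i. x 0 * ev 0 i + x \<nu> * ev \<nu> i + zw \<nu> x i)"
    using decomp[of x] by simp
  also have "\<dots> = x 0 * x \<nu> + Qf G m (zw \<nu> x)"
    unfolding Qf_def by (simp add: Mf_e0_l Mf_e0_r Mf_enu_l Mf_enu_r) (use nu1 in \<open>simp add: ev_apply\<close>)
  finally show ?thesis .
qed


end



definition Pm :: "(nat \<Rightarrow> nat) \<Rightarrow> (nat \<Rightarrow> int) \<Rightarrow> (nat \<Rightarrow> int)" where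
  "Pm \<pi> x = (\<lambda>i. x (\<pi> i))"

definition Rf :: "nat \<Rightarrow> nat \<Rightarrow> int \<Rightarrow> (nat \<Rightarrow> int) \<Rightarrow> int" where
  "Rf \<nu> \<delta> z x = (if \<delta> = 1 then x (2*\<nu>) * x (2*\<nu>)
           else if \<delta> = 2 then z * x (2*\<nu>) * x (2*\<nu>) + x (2*\<nu>) * x (2*\<nu>+1) + z * x (2*\<nu>+1) * x (2*\<nu>+1)
           else 0)"

definition rowv :: "nat \<Rightarrow> nat \<Rightarrow> int \<Rightarrow> (nat \<Rightarrow> int) \<Rightarrow> nat \<Rightarrow> int" where
  "rowv \<nu> \<delta> z x i = (if i < \<nu> then x (\<nu>+i) else if i = 2*\<nu> \<and> \<delta> = 1 then x (2*\<nu>)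
     else if i = 2*\<nu> \<and> \<delta> = 2 then z * x (2*\<nu>) + x (2*\<nu>+1)
     else if i = 2*\<nu>+1 \<and> \<delta> = 2 then z * x (2*\<nu>+1) else 0)"

lemma mult_if_left: "(if c then a else 0) * (b::int) = (if c then a*b else 0)" by simp

lemma sum_if_eq: "(\<Sum>j<(k::nat). (if P \<and> j = c then a else 0) * (x j::int)) = (if P \<and> c < k then a * x c else 0)"
  by (cases P) (simp_all add: sum.delta' mult_if_left)

context orth begin


lemma rowsum:
  assumes i: "i < m"
  shows "(\<Sum>j<m. G i j * x j) = rowv \<nu> \<delta> z x i"
proof -
  have g: "G i j = (if i < \<nu> \<and> j = \<nu>+i then 1 else 0) + (if i = 2*\<nu> \<and> \<delta> = 1 \<and> j = 2*\<nu> then 1 else 0)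
      + (if i = 2*\<nu> \<and> \<delta> = 2 \<and> j = 2*\<nu> then z else 0) + (if i = 2*\<nu> \<and> \<delta> = 2 \<and> j = 2*\<nu>+1 then 1 else 0)
      + (if i = 2*\<nu>+1 \<and> \<delta> = 2 \<and> j = 2*\<nu>+1 then z else 0)" for j
    by (auto simp add: Gmat_def)
  have "(\<Sum>j<m. G i j * x j) =
      (\<Sum>j<m. (if i < \<nu> \<and> j = \<nu>+i then 1 else 0) * x j) + (\<Sum>j<m. (if i = 2*\<nu> \<and> \<delta> = 1 \<and> j = 2*\<nu> then 1 else 0) * x j)
      + (\<Sum>j<m. (if i = 2*\<nu> \<and> \<delta> = 2 \<and> j = 2*\<nu> then z else 0) * x j) + (\<Sum>j<m. (if i = 2*\<nu> \<and> \<delta> = 2 \<and> j = 2*\<nu>+1 then 1 else 0) * x j)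
      + (\<Sum>j<m. (if i = 2*\<nu>+1 \<and> \<delta> = 2 \<and> j = 2*\<nu>+1 then z else 0) * x j)"
    unfolding g by (simp only: distrib_right sum.distrib)
  also have "\<dots> = rowv \<nu> \<delta> z x i"
    unfolding sum_if_eq[where P="_ \<and> _"] using i dl by (auto simp: rowv_def)
  finally show ?thesis .
qed

lemma Q_rows: "Qf G m x = (\<Sum>i<m. x i * rowv \<nu> \<delta> z x i)"
proof -
  have "Qf G m x = (\<Sum>i<m. x i * (\<Sum>j<m. G i j * x j))"
    by (simp add: Qf_def Mf_def sum_distrib_left mult.assoc)
  also have "\<dots> = (\<Sum>i<m. x i * rowv \<nu> \<delta> z x i)"
    by (intro sum.cong refl) (simp add: rowsum)
  finally show ?thesis .
qed

lemma Q_explicit: "Qf G m x = (\<Sum>k<\<nu>. x k * x (\<nu>+k)) + Rf \<nu> \<delta> z x"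
proof -
  have a: "(\<Sum>i<2*\<nu>. x i * rowv \<nu> \<delta> z x i) = (\<Sum>i<\<nu>. x i * rowv \<nu> \<delta> z x i)"
    by (rule sum.mono_neutral_right) (auto simp: rowv_def)
  have b: "(\<Sum>i<\<nu>. x i * rowv \<nu> \<delta> z x i) = (\<Sum>k<\<nu>. x k * x (\<nu>+k))"
    by (intro sum.cong refl) (simp add: rowv_def)
  have "\<delta> = 0 \<or> \<delta> = 1 \<or> \<delta> = 2" using dl by auto
  then show ?thesis
  proof (elim disjE)
    assume d: "\<delta> = 0"
    show ?thesis unfolding Q_rows using a b d by (simp add: Rf_def)
  next
    assume d: "\<delta> = 1"
    have "(\<Sum>i<m. x i * rowv \<nu> \<delta> z x i) = (\<Sum>i<2*\<nu>. x i * rowv \<nu> \<delta> z x i) + x (2*\<nu>) * rowv \<nu> \<delta> z x (2*\<nu>)"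
      using d by simp
    then show ?thesis unfolding Q_rows using a b d nu1 by (simp add: Rf_def rowv_def)
  next
    assume d: "\<delta> = 2"
    have "(\<Sum>i<m. x i * rowv \<nu> \<delta> z x i) = (\<Sum>i<2*\<nu>. x i * rowv \<nu> \<delta> z x i) + x (2*\<nu>) * rowv \<nu> \<delta> z x (2*\<nu>)
       + x (2*\<nu>+1) * rowv \<nu> \<delta> z x (2*\<nu>+1)"
      using d by (simp add: numeral_2_eq_2)
    then show ?thesis unfolding Q_rows using a b d nu1 by (simp add: Rf_def rowv_def algebra_simps)
  qed
qed

lemma parity:
  assumes a: "a \<in> Vset n m" and q: "even (Qf G m a)"
  shows "\<exists>i<2*\<nu>. odd (a i)"
proof (rule ccontr)
  assume "\<not> ?thesis"
  then have ev: "\<forall>i<2*\<nu>. even (a i)" by auto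
  have "even (\<Sum>k<\<nu>. a k * a (\<nu>+k))"
    by (rule dvd_sum) (use ev in auto)
  then have eR: "even (Rf \<nu> \<delta> z a)" using q by (simp add: Q_explicit)
  obtain i where i: "i < m" "odd (a i)" using a by (auto simp: Vset_iff)
  then have i2: "i \<ge> 2*\<nu>" using ev by (meson not_le)
  have "\<delta> = 0 \<or> \<delta> = 1 \<or> \<delta> = 2" using dl by auto
  then show False
  proof (elim disjE)
    assume "\<delta> = 0" then show False using i i2 by simp
  next
    assume d: "\<delta> = 1"
    then have "i = 2*\<nu>" using i i2 by simp
    then show False using eR d i by (simp add: Rf_def)
  next
    assume d: "\<delta> = 2"
    then have "i = 2*\<nu> \<or> i = 2*\<nu>+1" using i i2 by auto
    then show False using eR d i odd_z by (auto simp add: Rf_def)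
  qed
qed

lemma perm_inviso:
  assumes inv: "\<And>k. \<pi> (\<pi> k) = k" and fx: "\<And>k. k \<ge> 2*\<nu> \<Longrightarrow> \<pi> k = k"
    and tl: "\<And>k. k < \<nu> \<Longrightarrow> \<tau> k < \<nu>" and ti: "\<And>k. k < \<nu> \<Longrightarrow> \<tau> (\<tau> k) = k"
    and pr: "\<And>k. k < \<nu> \<Longrightarrow> (\<pi> k = \<tau> k \<and> \<pi> (\<nu>+k) = \<nu> + \<tau> k) \<or> (\<pi> k = \<nu> + \<tau> k \<and> \<pi> (\<nu>+k) = \<tau> k)"
  shows "inviso G m (Pm \<pi>) (Pm \<pi>)"
proof -
  have Q: "Qf G m (Pm \<pi> x) = Qf G m x" for x
  proof -
    have r: "Rf \<nu> \<delta> z (Pm \<pi> x) = Rf \<nu> \<delta> z x" using fx by (simp add: Rf_def Pm_def)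
    have "(\<Sum>k<\<nu>. x (\<pi> k) * x (\<pi> (\<nu>+k))) = (\<Sum>k<\<nu>. x (\<tau> k) * x (\<nu> + \<tau> k))"
    proof (intro sum.cong refl)
      fix k assume "k \<in> {..<\<nu>}"
      then show "x (\<pi> k) * x (\<pi> (\<nu>+k)) = x (\<tau> k) * x (\<nu> + \<tau> k)"
        using pr[of k] by (auto simp: mult.commute)
    qed
    also have "\<dots> = (\<Sum>k<\<nu>. x k * x (\<nu> + k))"
      by (rule sum.reindex_bij_witness[where i=\<tau> and j=\<tau>]) (auto simp: tl ti)
    finally show ?thesis using r by (simp add: Q_explicit Pm_def)
  qed
  have s: "supp m x \<Longrightarrow> supp m (Pm \<pi> x)" for x using fx by (simp add: supp_def Pm_def)
  have "iso G m (Pm \<pi>)" using Q s by (simp add: iso_def Pm_def)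
  then show ?thesis using inv by (simp add: inviso_def Pm_def)
qed

end



lemma graph_aut_comp:
  assumes f: "graph_aut V E f" and g: "graph_aut V E g"
  shows "graph_aut V E (\<lambda>x. g (f x))"
proof -
  have bf: "bij_betw f V V" and bg: "bij_betw g V V" using f g by (auto simp: graph_aut_def)
  have "bij_betw (g \<circ> f) V V" by (rule bij_betw_trans[OF bf bg])
  then have b: "bij_betw (\<lambda>x. g (f x)) V V" by (simp add: comp_def)
  have "E x y \<longleftrightarrow> E (g (f x)) (g (f y))" if "x \<in> V" "y \<in> V" for x y
  proof -
    have "f x \<in> V" "f y \<in> V" using bf that by (auto simp: bij_betw_def)
    then show ?thesis using f g that by (auto simp: graph_aut_def)
  qed
  then show ?thesis using b by (simp add: graph_aut_def)
qed

context orth begin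

lemma perm_exists:
  assumes i: "i < 2*\<nu>"
  shows "\<exists>\<pi>. inviso G m (Pm \<pi>) (Pm \<pi>) \<and> \<pi> 0 = i"
proof (cases "i < \<nu>")
  case True
  define \<pi> where "\<pi> k = (if k = 0 then i else if k = i then 0 else if k = \<nu> then \<nu>+i else if k = \<nu>+i then \<nu> else k)" for k
  define \<tau> where "\<tau> k = (if k = 0 then i else if k = i then 0 else k)" for k
  have "inviso G m (Pm \<pi>) (Pm \<pi>)"
    by (rule perm_inviso[where \<tau>=\<tau>]) (use True nu1 in \<open>auto simp: \<pi>_def \<tau>_def\<close>)
  then show ?thesis by (auto simp: \<pi>_def)
next
  case False
  define j where "j = i - \<nu>"
  have j: "j < \<nu>" "i = \<nu> + j" using i False by (auto simp: j_def)
  define \<pi> where "\<pi> k = (if k = 0 then \<nu>+j else if k = \<nu>+j then 0 else if k = \<nu> then j else if k = j then \<nu> else k)" for k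
  define \<tau> where "\<tau> k = (if k = 0 then j else if k = j then 0 else k)" for k
  have "inviso G m (Pm \<pi>) (Pm \<pi>)"
    by (rule perm_inviso[where \<tau>=\<tau>]) (use j nu1 in \<open>auto simp: \<pi>_def \<tau>_def\<close>)
  then show ?thesis using j by (auto simp: \<pi>_def)
qed

lemma ev_Vset: "k < m \<Longrightarrow> ev k \<in> Vset n m"
proof -
  assume k: "k < m"
  have "(1::int) < N" by (rule N_gt1)
  have "\<forall>i<m. 0 \<le> ev k i \<and> ev k i < N" using N_gt1 n1 by (simp add: ev_apply)
  moreover have "\<exists>i<m. odd (ev k i)" using k by (intro exI[of _ k]) (simp add: ev_apply)
  ultimately show ?thesis using supp_ev[OF k] unfolding Vset_iff by blast
qed

lemma one_modN: "1 mod N = 1" using N_gt1 n1 by simp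

lemma step1:
  assumes aV: "a \<in> Vset n m" and aQ: "Qf G m a mod N = 0"
  shows "\<exists>T S l. inviso G m T S \<and> odd l \<and> congv N m (T (ev 0)) (\<lambda>i. l * a i)"
proof -
  have "even (Qf G m a)" using aQ even_mod_pow2[OF n1, of "Qf G m a"] by simp
  then obtain i where i: "i < 2*\<nu>" "odd (a i)" using parity[OF aV] by blast
  obtain \<pi> where P: "inviso G m (Pm \<pi>) (Pm \<pi>)" and p0: "\<pi> 0 = i" using perm_exists[OF i(1)] by blast
  have Pi: "iso G m (Pm \<pi>)" and PP: "\<And>x. Pm \<pi> (Pm \<pi> x) = x" using P by (auto simp: inviso_def)
  define pa where "pa = Pm \<pi> a"
  have pa0: "odd (pa 0)" using i p0 by (simp add: pa_def Pm_def)
  obtain l where l: "odd l" "(pa 0 * l) mod N = 1" using inverse_ex[OF pa0] by blast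
  define a1 where "a1 = (\<lambda>i. l * pa i)"
  define w where "w = zw \<nu> a1"
  have sa: "supp m a" using aV by (rule Vset_supp)
  have spa: "supp m pa" unfolding pa_def by (rule iso_supp[OF Pi sa])
  have sa1: "supp m a1" using spa by (simp add: a1_def supp_def)
  have sw: "supp m w" unfolding w_def by (rule supp_zw[OF sa1])
  have E: "inviso G m (eich G m (ev \<nu>) w) (eich G m (ev \<nu>) (\<lambda>i. - w i))"
    by (rule eich_inviso[OF Q_enu _ supp_ev[OF nu_lt(1)] sw]) (simp add: B_enu w_def)
  have Ei: "iso G m (eich G m (ev \<nu>) w)" using E by (simp add: inviso_def)
  have e1: "eich G m (ev \<nu>) w (ev 0) = (\<lambda>i. ev 0 i + w i - Qf G m w * ev \<nu> i)"
    by (simp add: eich_def B_e0 ev_apply w_def)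
  have qa1: "Qf G m a1 = a1 0 * a1 \<nu> + Qf G m w" unfolding w_def by (rule Q_decomp)
  have "Qf G m a1 = l * l * Qf G m a" by (simp add: a1_def Qf_smul pa_def iso_Q[OF Pi])
  then have "N dvd Qf G m a1" using aQ by (simp add: mod_eq_0_iff_dvd)
  then have d1: "N dvd a1 0 * a1 \<nu> + Qf G m w" using qa1 by simp
  have a10: "a1 0 mod N = 1" using l(2) by (simp add: a1_def mult.commute)
  have "(a1 0 * a1 \<nu>) mod N = ((a1 0 mod N) * a1 \<nu>) mod N" by (simp add: mod_mult_left_eq)
  then have "(a1 0 * a1 \<nu>) mod N = a1 \<nu> mod N" using a10 by simp
  then have h: "N dvd a1 0 * a1 \<nu> - a1 \<nu>" by (simp add: mod_eq_dvd_iff)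
  have "N dvd (a1 0 * a1 \<nu> + Qf G m w) - (a1 0 * a1 \<nu> - a1 \<nu>)" by (rule dvd_diff[OF d1 h])
  then have "N dvd a1 \<nu> + Qf G m w" by (simp add: algebra_simps)
  then have "N dvd - Qf G m w - a1 \<nu>"
    by (metis dvd_minus_iff minus_diff_eq diff_minus_eq_add add.commute)
  then have anu: "(- Qf G m w) mod N = a1 \<nu> mod N" by (simp add: mod_eq_dvd_iff)
  have c1: "congv N m (eich G m (ev \<nu>) w (ev 0)) a1"
    unfolding congv_def e1
  proof (intro allI impI)
    fix k assume k: "k < m"
    show "(ev 0 k + w k - Qf G m w * ev \<nu> k) mod N = a1 k mod N"
    proof (cases "k = 0")
      case True then show ?thesis using nu1 a10 one_modN by (simp add: ev_apply w_def)
    next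
      case False
      show ?thesis
      proof (cases "k = \<nu>")
        case True then show ?thesis using nu1 anu by (simp add: ev_apply w_def)
      next
        case False2: False
        then show ?thesis using False by (simp add: ev_apply w_def zw_def)
      qed
    qed
  qed
  have se1: "supp m (eich G m (ev \<nu>) w (ev 0))" by (rule iso_supp[OF Ei supp_ev[OF nu_lt(2)]])
  have "congv N m (Pm \<pi> (eich G m (ev \<nu>) w (ev 0))) (Pm \<pi> a1)"
    by (rule iso_congv[OF Pi se1 sa1 c1])
  moreover have "Pm \<pi> a1 = (\<lambda>i. l * a i)"
    using PP[of a] by (simp add: a1_def pa_def Pm_def fun_eq_iff)
  ultimately have "congv N m (Pm \<pi> (eich G m (ev \<nu>) w (ev 0))) (\<lambda>i. l * a i)" by simp
  moreover have "inviso G m (\<lambda>x. Pm \<pi> (eich G m (ev \<nu>) w x)) (\<lambda>x. eich G m (ev \<nu>) (\<lambda>i. - w i) (Pm \<pi> x))"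
    by (rule inviso_comp[OF P E])
  ultimately show ?thesis using l(1) by blast
qed

end



context orth begin

lemma step2:
  assumes T: "inviso G m T S" and l: "odd l" and Ta: "congv N m (T (ev 0)) (\<lambda>i. l * a i)"
    and aV: "a \<in> Vset n m" and bV: "b \<in> Vset n m" and bQ: "Qf G m b mod N = 0"
    and ab: "odd (Bf G m a b)"
  shows "\<exists>T' S' \<mu>. inviso G m T' S' \<and> odd \<mu> \<and> congv N m (T' (ev 0)) (\<lambda>i. l * a i)
           \<and> congv N m (T' (ev \<nu>)) (\<lambda>i. \<mu> * b i)"
proof -
  have Ti: "iso G m T" and Si: "iso G m S" and TS: "\<And>x. T (S x) = x" and ST: "\<And>x. S (T x) = x"
    using T by (auto simp: inviso_def)
  define b2 where "b2 = S b"
  have "Bf G m (ev 0) b2 = Bf G m (T (ev 0)) (T b2)" by (simp add: iso_B[OF Ti])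
  also have "\<dots> = Bf G m (T (ev 0)) b" by (simp add: b2_def TS)
  finally have bb: "Bf G m (ev 0) b2 = Bf G m (T (ev 0)) b" .
  have "Bf G m (T (ev 0)) b mod N = Bf G m (\<lambda>i. l * a i) b mod N"
    by (rule cong_Bf[OF Ta congv_refl])
  also have "\<dots> = (l * Bf G m a b) mod N" by (simp add: Bf_def algebra_simps)
  finally have "odd (Bf G m (T (ev 0)) b)"
    using l ab even_mod_pow2[OF n1] by (metis even_mult_iff)
  then have b2nu: "odd (b2 \<nu>)" using bb by (simp add: B_e0)
  obtain \<mu> where mu: "odd \<mu>" "(b2 \<nu> * \<mu>) mod N = 1" using inverse_ex[OF b2nu] by blast
  define b3 where "b3 = (\<lambda>i. \<mu> * b2 i)"
  define w where "w = zw \<nu> b3"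
  have sb: "supp m b" using bV by (rule Vset_supp)
  have sb2: "supp m b2" unfolding b2_def by (rule iso_supp[OF Si sb])
  have sb3: "supp m b3" using sb2 by (simp add: b3_def supp_def)
  have sw: "supp m w" unfolding w_def by (rule supp_zw[OF sb3])
  have E: "inviso G m (eich G m (ev 0) w) (eich G m (ev 0) (\<lambda>i. - w i))"
    by (rule eich_inviso[OF Q_e0 _ supp_ev[OF nu_lt(2)] sw]) (simp add: B_e0 w_def)
  have Ei: "iso G m (eich G m (ev 0) w)" using E by (simp add: inviso_def)
  have e0: "eich G m (ev 0) w (ev 0) = ev 0"
    using nu1 by (simp add: eich_def B_e0 ev_apply w_def fun_eq_iff)
  have e1: "eich G m (ev 0) w (ev \<nu>) = (\<lambda>i. ev \<nu> i + w i - Qf G m w * ev 0 i)"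
    using nu1 by (simp add: eich_def B_enu ev_apply w_def)
  have qb3: "Qf G m b3 = b3 0 * b3 \<nu> + Qf G m w" unfolding w_def by (rule Q_decomp)
  have "Qf G m b3 = \<mu> * \<mu> * Qf G m b" by (simp add: b3_def Qf_smul b2_def iso_Q[OF Si])
  then have "N dvd Qf G m b3" using bQ by (simp add: mod_eq_0_iff_dvd)
  then have d1: "N dvd b3 0 * b3 \<nu> + Qf G m w" using qb3 by simp
  have b3nu: "b3 \<nu> mod N = 1" using mu(2) by (simp add: b3_def mult.commute)
  have "(b3 0 * b3 \<nu>) mod N = (b3 0 * (b3 \<nu> mod N)) mod N" by (simp add: mod_mult_right_eq)
  then have "(b3 0 * b3 \<nu>) mod N = b3 0 mod N" using b3nu by simp
  then have h: "N dvd b3 0 * b3 \<nu> - b3 0" by (simp add: mod_eq_dvd_iff)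
  have "N dvd (b3 0 * b3 \<nu> + Qf G m w) - (b3 0 * b3 \<nu> - b3 0)" by (rule dvd_diff[OF d1 h])
  then have "N dvd b3 0 + Qf G m w" by (simp add: algebra_simps)
  then have "N dvd - Qf G m w - b3 0"
    by (metis dvd_minus_iff minus_diff_eq diff_minus_eq_add add.commute)
  then have b30: "(- Qf G m w) mod N = b3 0 mod N" by (simp add: mod_eq_dvd_iff)
  have c1: "congv N m (eich G m (ev 0) w (ev \<nu>)) b3"
    unfolding congv_def e1
  proof (intro allI impI)
    fix k assume k: "k < m"
    show "(ev \<nu> k + w k - Qf G m w * ev 0 k) mod N = b3 k mod N"
    proof (cases "k = 0")
      case True then show ?thesis using nu1 b30 by (simp add: ev_apply w_def)
    next
      case False
      show ?thesis
      proof (cases "k = \<nu>")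
        case True then show ?thesis using nu1 b3nu one_modN by (simp add: ev_apply w_def)
      next
        case False2: False
        then show ?thesis using False by (simp add: ev_apply w_def zw_def)
      qed
    qed
  qed
  have se1: "supp m (eich G m (ev 0) w (ev \<nu>))" by (rule iso_supp[OF Ei supp_ev[OF nu_lt(1)]])
  have "congv N m (T (eich G m (ev 0) w (ev \<nu>))) (T b3)"
    by (rule iso_congv[OF Ti se1 sb3 c1])
  moreover have "T b3 = (\<lambda>i. \<mu> * b i)"
    by (simp add: b3_def b2_def iso_smul[OF Ti] TS)
  ultimately have c2: "congv N m (T (eich G m (ev 0) w (ev \<nu>))) (\<lambda>i. \<mu> * b i)" by simp
  have I2: "inviso G m (\<lambda>x. T (eich G m (ev 0) w x)) (\<lambda>x. eich G m (ev 0) (\<lambda>i. - w i) (S x))"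
    by (rule inviso_comp[OF T E])
  have c0: "congv N m ((\<lambda>x. T (eich G m (ev 0) w x)) (ev 0)) (\<lambda>i. l * a i)" using Ta e0 by simp
  show ?thesis
    by (rule exI[of _ "\<lambda>x. T (eich G m (ev 0) w x)"], rule exI[of _ "\<lambda>x. eich G m (ev 0) (\<lambda>i. - w i) (S x)"],
        rule exI[of _ \<mu>]) (use I2 mu(1) c0 c2 in simp)
qed

abbreviation "V \<equiv> orth_vertices n \<nu> \<delta> z"
abbreviation "Adj \<equiv> orth_adj n \<nu> \<delta> z"

lemma E0_vert: "eqcls n m (ev 0) \<in> V"
  unfolding vert_iff using ev_Vset[OF nu_lt(2)] by (intro bexI[of _ "ev 0"] conjI) (simp_all add: Q_e0)

lemma sig_target:
  assumes T: "inviso G m T S" and k: "k < m" and a: "a \<in> Vset n m" and l: "odd l"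
    and c: "congv N m (T (ev k)) (\<lambda>i. l * a i)"
  shows "sig T (eqcls n m (ev k)) = eqcls n m a"
proof -
  have r: "red (T (ev k)) \<in> Vset n m" and e: "sig T (eqcls n m (ev k)) = eqcls n m (red (T (ev k)))"
    using sig_eqcls[OF T ev_Vset[OF k]] by auto
  have "congv N m (red (T (ev k))) (\<lambda>i. l * a i)" by (rule congv_trans[OF red_congv c])
  then have "red (T (ev k)) \<in> eqcls n m a" using r l by (auto simp: eqcls_iff)
  then show ?thesis using e cls_eq[OF a] by simp
qed

lemma move_vertex:
  assumes X: "X \<in> V"
  shows "\<exists>T S. inviso G m T S \<and> sig T (eqcls n m (ev 0)) = X"
proof -
  obtain a where a: "a \<in> Vset n m" "Qf G m a mod N = 0" "X = eqcls n m a"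
    using X by (auto simp: vert_iff)
  obtain T S l where "inviso G m T S" "odd l" "congv N m (T (ev 0)) (\<lambda>i. l * a i)"
    using step1[OF a(1,2)] by blast
  then show ?thesis using sig_target[OF _ nu_lt(2) a(1)] a(3) by blast
qed

lemma move_arc:
  assumes X: "X \<in> V" and Y: "Y \<in> V" and XY: "Adj X Y"
  shows "\<exists>T S. inviso G m T S \<and> sig T (eqcls n m (ev 0)) = X \<and> sig T (eqcls n m (ev \<nu>)) = Y"
proof -
  obtain a b where ab: "a \<in> X" "b \<in> Y" "odd (Bf G m a b)" using XY by (auto simp: adj_iff)
  have a: "a \<in> Vset n m" "Qf G m a mod N = 0" "X = eqcls n m a" using vert_rep[OF X ab(1)] by auto
  have b: "b \<in> Vset n m" "Qf G m b mod N = 0" "Y = eqcls n m b" using vert_rep[OF Y ab(2)] by auto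
  obtain T S l where T: "inviso G m T S" "odd l" "congv N m (T (ev 0)) (\<lambda>i. l * a i)"
    using step1[OF a(1,2)] by blast
  obtain T' S' \<mu> where T': "inviso G m T' S'" "odd \<mu>" "congv N m (T' (ev 0)) (\<lambda>i. l * a i)"
      "congv N m (T' (ev \<nu>)) (\<lambda>i. \<mu> * b i)"
    using step2[OF T a(1) b(1,2) ab(3)] by blast
  have "sig T' (eqcls n m (ev 0)) = X" using sig_target[OF T'(1) nu_lt(2) a(1) T(2) T'(3)] a(3) by simp
  moreover have "sig T' (eqcls n m (ev \<nu>)) = Y" using sig_target[OF T'(1) nu_lt(1) b(1) T'(2) T'(4)] b(3) by simp
  ultimately show ?thesis using T'(1) by blast
qed

lemma Enu_vert: "eqcls n m (ev \<nu>) \<in> V"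
  unfolding vert_iff using ev_Vset[OF nu_lt(1)] by (intro bexI[of _ "ev \<nu>"] conjI) (simp_all add: Q_enu)

lemma vt: "vertex_transitive V Adj"
  unfolding vertex_transitive_def
proof (intro ballI)
  fix x y assume x: "x \<in> V" and y: "y \<in> V"
  obtain T1 S1 where T1: "inviso G m T1 S1" "sig T1 (eqcls n m (ev 0)) = x" using move_vertex[OF x] by blast
  obtain T2 S2 where T2: "inviso G m T2 S2" "sig T2 (eqcls n m (ev 0)) = y" using move_vertex[OF y] by blast
  have S1: "inviso G m S1 T1" using T1(1) by (rule inviso_sym)
  have "sig S1 x = eqcls n m (ev 0)" using sig_inv[OF T1(1) E0_vert] T1(2) by simp
  then have "sig T2 (sig S1 x) = y" using T2(2) by simp
  moreover have "graph_aut V Adj (\<lambda>X. sig T2 (sig S1 X))"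
    by (rule graph_aut_comp[OF sig_aut[OF S1] sig_aut[OF T2(1)]])
  ultimately show "\<exists>\<sigma>. graph_aut V Adj \<sigma> \<and> \<sigma> x = y" by blast
qed

lemma at: "arc_transitive V Adj"
  unfolding arc_transitive_def
proof (intro ballI impI)
  fix x y x' y' assume x: "x \<in> V" and y: "y \<in> V" and x': "x' \<in> V" and y': "y' \<in> V"
    and a1: "Adj x y" and a2: "Adj x' y'"
  obtain T1 S1 where T1: "inviso G m T1 S1" "sig T1 (eqcls n m (ev 0)) = x" "sig T1 (eqcls n m (ev \<nu>)) = y"
    using move_arc[OF x y a1] by blast
  obtain T2 S2 where T2: "inviso G m T2 S2" "sig T2 (eqcls n m (ev 0)) = x'" "sig T2 (eqcls n m (ev \<nu>)) = y'"
    using move_arc[OF x' y' a2] by blast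
  have S1: "inviso G m S1 T1" using T1(1) by (rule inviso_sym)
  have "sig S1 x = eqcls n m (ev 0)" using sig_inv[OF T1(1) E0_vert] T1(2) by simp
  moreover have "sig S1 y = eqcls n m (ev \<nu>)" using sig_inv[OF T1(1) Enu_vert] T1(3) by simp
  moreover have "graph_aut V Adj (\<lambda>X. sig T2 (sig S1 X))"
    by (rule graph_aut_comp[OF sig_aut[OF S1] sig_aut[OF T2(1)]])
  ultimately show "\<exists>\<sigma>. graph_aut V Adj \<sigma> \<and> \<sigma> x = x' \<and> \<sigma> y = y'" using T2 by auto
qed

end

theorem theorem2p5:
  fixes n \<nu> \<delta> :: nat and z :: int
  assumes "n \<ge> 1" and "\<nu> \<ge> 1" and "\<delta> \<in> {0, 1, 2}" and "zunit n z"
  shows "vertex_transitive (orth_vertices n \<nu> \<delta> z) (orth_adj n \<nu> \<delta> z)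
       \<and> arc_transitive (orth_vertices n \<nu> \<delta> z) (orth_adj n \<nu> \<delta> z)"
proof -
  interpret orth n \<nu> \<delta> z using assms by unfold_locales auto
  show ?thesis using vt at by simp
qed


end
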